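(* In the setting below, the quasi-cyclic code $C$ is symplectic LCD if and only if all of the following hold: (I) $g(x)$ is self-reciprocal; (II) $l(x)$ is self-reciprocal; (III) $r_{11}(x)=1$; (IV) $\gcd\big(r_{22}(x),\ g_{11}(x)\bar g_{12}(x)-g_{12}(x)\bar g_{11}(x)\big)=1$.
   Context: Let $q$ be a prime power, $F=\mathbb{F}_q$, $m\ge1$ with $\gcd(q,m)=1$, and $R=F[x]/\langle x^m-1\rangle$; elements of $R$ are represented by polynomials of degree $<m$ and identified with their coefficient vectors in $F^m$. A quasi-cyclic code of length $2m$ and index $2$ is an $R$-submodule $C\subseteq R^2$. For $a,b\in R$ let $\langle a,b\rangle_e$ be the standard dot product of their coefficient vectors. The symplectic form on $R^2$ is $\langle (a_1,a_2),(b_1,b_2)\rangle_s=\langle a_1,b_2\rangle_e-\langle a_2,b_1\rangle_e$; $C^{\perp_s}$ is the dual with respect to it, and $C$ is symplectic LCD if $C\cap C^{\perp_s}=\{0\}$. For a nonzero polynomial $f$ of degree $k$, $f^*(x)=x^kf(x^{-1})$; $f$ is self-reciprocal if $f^*=\alpha f$ for some $\alpha\in F$. For a polynomial $f$ of degree at most $m$, $\bar f(x)=x^m f(x^{-1})$. Suppose $C$ is generated as an $R$-module by $(g_{11}(x),g_{12}(x))$ and $(0,g_{22}(x))$, where $g_{11},g_{12},g_{22}\in F[x]$ satisfy: $g_{11}\mid x^m-1$, $g_{22}\mid x^m-1$, $\deg g_{12}<\deg g_{22}$, and $g_{11}g_{22}\mid (x^m-1)g_{12}$. Define $g=\gcd(g_{11},g_{22})$,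 $l=(x^m-1)/\mathrm{lcm}(g_{11},g_{22})$, $g_{11}=g\,g_{11}'$, $g_{22}=g\,g_{22}'$, $r_{11}=\gcd(g_{11}',g_{11}'^* )$, $r_{22}=\gcd(g_{22}',g_{22}'^* )$ (gcds taken monic). *)

theory Defs
  imports "HOL-Computational_Algebra.Computational_Algebra"
begin

definition xm1 :: "nat \<Rightarrow> 'a::field poly" where
  "xm1 m = monom 1 m - 1"

text \<open>Elements of R = F[x]/(x^m-1), represented by polynomials of degree < m.\<close>
definition Rm :: "nat \<Rightarrow> 'a::field poly set" where
  "Rm m = {p. degree p < m}"

definition euc :: "nat \<Rightarrow> 'a::field poly \<Rightarrow> 'a poly \<Rightarrow> 'a" where
  "euc m a b = (\<Sum>i<m. coeff a i * coeff b i)"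

definition symp :: "nat \<Rightarrow> 'a::field poly \<times> 'a poly \<Rightarrow> 'a poly \<times> 'a poly \<Rightarrow> 'a" where
  "symp m u v = euc m (fst u) (snd v) - euc m (snd u) (fst v)"

definition qc_code :: "nat \<Rightarrow> 'a::field poly \<Rightarrow> 'a poly \<Rightarrow> 'a poly \<Rightarrow> ('a poly \<times> 'a poly) set" where
  "qc_code m g11 g12 g22 =
     {((a * g11) mod xm1 m, (a * g12 + b * g22) mod xm1 m) | a b. a \<in> Rm m \<and> b \<in> Rm m}"

definition symp_dual :: "nat \<Rightarrow> ('a::field poly \<times> 'a poly) set \<Rightarrow> ('a poly \<times> 'a poly) set" where
  "symp_dual m C = {v. fst v \<in> Rm m \<and> snd v \<in> Rm m \<and> (\<forall>c\<in>C. symp m c v = 0)}"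

definition symp_LCD :: "nat \<Rightarrow> ('a::field poly \<times> 'a poly) set \<Rightarrow> bool" where
  "symp_LCD m C \<longleftrightarrow> C \<inter> symp_dual m C = {(0, 0)}"

text \<open>f^* = x^{deg f} f(1/x) is the library's reflect_poly.\<close>
definition self_reciprocal :: "'a::field poly \<Rightarrow> bool" where
  "self_reciprocal f \<longleftrightarrow> f \<noteq> 0 \<and> (\<exists>\<alpha>. reflect_poly f = smult \<alpha> f)"

text \<open>bar f = x^m f(1/x) for deg f \<le> m.\<close>
definition bar :: "nat \<Rightarrow> 'a::field poly \<Rightarrow> 'a poly" where
  "bar m f = (\<Sum>i\<le>m. monom (coeff f i) (m - i))"

end

theory Submission
  imports Defs
begin


abbreviation X where "X m \<equiv> xm1 m"

definition sg :: "nat \<Rightarrow> 'a::field poly \<Rightarrow> 'a poly" where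
  "sg m h = pcompose h (monom 1 (m - 1))"

lemma sg_add: "sg m (a + b) = sg m a + sg m b" by (simp add: sg_def pcompose_add)
lemma sg_diff: "sg m (a - b) = sg m a - sg m b" by (simp add: sg_def pcompose_diff)
lemma sg_mult: "sg m (a * b) = sg m a * sg m b" by (simp add: sg_def pcompose_mult)
lemma sg_minus: "sg m (- a) = - sg m a" by (simp add: sg_def pcompose_uminus)
lemma sg_0[simp]: "sg m 0 = 0" by (simp add: sg_def)

lemma pcompose_monom_gen: "pcompose (monom c i) q = smult c (q ^ i)"
  by (induction i) (simp_all add: monom_Suc pcompose_pCons monom_0)

lemma dvd_pow_minus_1: "(y - 1) dvd (y ^ k - (1::'a::comm_ring_1))"
proof (induction k)
  case (Suc k)
  have "y ^ Suc k - 1 = y * (y ^ k - 1) + (y - 1)" by (simp add: algebra_simps)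
  then show ?case using Suc by (metis dvd_add dvd_mult dvd_refl)
qed simp

lemma X_dvd_monom_diff:
  fixes m :: nat
  assumes "a mod m = b mod m"
  shows "(X m :: 'a::field poly) dvd monom 1 a - monom 1 b"
proof -
  have key: "(X m :: 'a poly) dvd monom 1 (b + m * k) - monom 1 b" for b k
  proof -
    have "monom 1 (b + m * k) - monom 1 b = (monom 1 b :: 'a poly) * ((monom 1 m) ^ k - 1)"
      by (simp add: monom_power mult_monom right_diff_distrib mult.commute)
    moreover have "(X m :: 'a poly) dvd (monom 1 m) ^ k - 1"
      unfolding xm1_def by (rule dvd_pow_minus_1)
    ultimately show ?thesis by simp
  qed
  show ?thesis
  proof (cases "a \<le> b")
    case True
    then obtain k where "b = a + m * k"
      using assms by (metis le_add_diff_inverse mod_eq_dvd_iff_nat dvdE)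
    then show ?thesis using key[of a k]
      by (metis dvd_minus_iff minus_diff_eq)
  next
    case False
    then obtain k where "a = b + m * k"
      using assms by (metis le_add_diff_inverse mod_eq_dvd_iff_nat dvdE nat_le_linear)
    then show ?thesis using key[of b k] by simp
  qed
qed

lemma X_dvd_monom_diff_c:
  assumes "a mod m = b mod m"
  shows "(X m :: 'a::field poly) dvd monom c a - monom c b"
proof -
  have "monom c a - monom c b = smult c (monom 1 a - monom 1 b :: 'a poly)"
    by (simp add: smult_monom smult_diff_right)
  then show ?thesis using X_dvd_monom_diff[OF assms, where 'a='a] by (simp add: dvd_smult)
qed



lemma X_ne0: "m \<ge> 1 \<Longrightarrow> (X m :: 'a::field poly) \<noteq> 0"
proof -
  assume m: "m \<ge> 1"
  have "coeff (X m :: 'a poly) m = 1" using m unfolding xm1_def by (simp add: coeff_monom)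
  then show ?thesis by auto
qed

lemma degree_X: "m \<ge> 1 \<Longrightarrow> degree (X m :: 'a::field poly) = m"
proof -
  assume m: "m \<ge> 1"
  have "coeff (X m :: 'a poly) m = 1" using m unfolding xm1_def by (simp add: coeff_monom)
  then have "m \<le> degree (X m :: 'a poly)" by (simp add: le_degree)
  moreover have "degree (X m :: 'a poly) \<le> m" unfolding xm1_def
    by (metis degree_diff_le degree_monom_le degree_1 le0)
  ultimately show ?thesis by simp
qed

lemma coeff_X0: "m \<ge> 1 \<Longrightarrow> coeff (X m :: 'a::field poly) 0 = -1"
  unfolding xm1_def by (simp add: coeff_monom)

lemma pcompose_diff_dvd: "(u - v) dvd (pcompose h u - pcompose h (v::'a::comm_ring_1 poly))"
proof (induction h)
  case 0
  then show ?case by simp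
next
  case (pCons a h)
  have "pcompose (pCons a h) u - pcompose (pCons a h) v
      = (u - v) * pcompose h u + v * (pcompose h u - pcompose h v)"
    by (simp add: pcompose_pCons algebra_simps)
  then show ?case using pCons by (metis dvd_add dvd_mult dvd_mult2 dvd_refl)
qed

lemma sg_cong: "(X m :: 'a::field poly) dvd u - v \<Longrightarrow> X m dvd sg m u - sg m v"
proof -
  assume "X m dvd u - v"
  then obtain k where k: "u - v = X m * k" by (elim dvdE)
  have "sg m u - sg m v = sg m (X m) * sg m k" by (metis k sg_diff sg_mult)
  moreover have "sg m (X m) = (monom 1 (m - 1)) ^ m - (1 :: 'a poly)"
    by (simp add: sg_def xm1_def pcompose_diff pcompose_monom_gen pcompose_1)
  moreover have "(X m :: 'a poly) dvd (monom 1 (m - 1)) ^ m - 1"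
    using X_dvd_monom_diff[of "(m-1)*m" m 0] by (simp add: monom_power mult.commute)
  ultimately show ?thesis by simp
qed

lemma sg_sg: "m \<ge> 1 \<Longrightarrow> (X m :: 'a::field poly) dvd sg m (sg m h) - h"
proof -
  assume m: "m \<ge> 1"
  have ss: "pcompose (monom 1 (m-1)) (monom 1 (m-1)) = (monom 1 ((m-1)*(m-1)) :: 'a poly)"
    by (simp add: pcompose_monom_gen monom_power)
  have e: "sg m (sg m h) = pcompose h (monom 1 ((m-1)*(m-1)))"
    unfolding sg_def by (simp only: pcompose_assoc[symmetric] ss)
  have "((m-1)*(m-1)) mod m = 1 mod m"
  proof (cases "m = 1")
    case False
    then obtain k where mk: "m = Suc (Suc k)" using m by (metis Suc_le_D not0_implies_Suc One_nat_def)
    then have eq: "(m-1)*(m-1) = 1 + k * m" by (simp add: algebra_simps)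
    show ?thesis by (simp only: eq mod_mult_self1)
  qed simp
  then have "(X m :: 'a poly) dvd monom 1 ((m-1)*(m-1)) - monom 1 1"
    by (rule X_dvd_monom_diff)
  moreover have "monom 1 1 = [:0, 1::'a:]" by (simp add: monom_Suc)
  ultimately have "(X m :: 'a poly) dvd pcompose h (monom 1 ((m-1)*(m-1))) - pcompose h [:0,1:]"
    using pcompose_diff_dvd dvd_trans by metis
  then show ?thesis using e by simp
qed

lemma sg_sum: "degree h \<le> N \<Longrightarrow> sg m h = (\<Sum>i\<le>N. monom (coeff h i) (i*(m-1)))"
proof -
  assume "degree h \<le> N"
  then have "sg m h = sg m (\<Sum>i\<le>N. monom (coeff h i) i)"
    by (simp add: poly_as_sum_of_monoms')
  also have "\<dots> = (\<Sum>i\<le>N. monom (coeff h i) (i*(m-1)))"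
    by (simp add: sg_def pcompose_sum pcompose_monom_gen monom_power smult_monom mult.commute)
  finally show ?thesis .
qed

lemma sg_G:
  assumes "degree h \<le> N" "m \<ge> 1"
  shows "(X m :: 'a::field poly) dvd monom 1 N * sg m h - (\<Sum>i\<le>N. monom (coeff h i) (N - i))"
proof -
  have "monom 1 N * sg m h - (\<Sum>i\<le>N. monom (coeff h i) (N - i))
      = (\<Sum>i\<le>N. monom (coeff h i) (N + i*(m-1)) - monom (coeff h i) (N - i))"
    by (simp add: sg_sum[OF assms(1)] sum_distrib_left mult_monom sum_subtractf)
  moreover have "(X m :: 'a poly) dvd monom (coeff h i) (N + i*(m-1)) - monom (coeff h i) (N - i)"
    if "i \<in> {..N}" for i
  proof (rule X_dvd_monom_diff_c)
    from that have "N + i*(m-1) = (N - i) + i * m" using assms(2)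
      by (simp add: algebra_simps diff_mult_distrib2)
    then show "(N + i*(m-1)) mod m = (N - i) mod m" by simp
  qed
  ultimately show ?thesis by (metis (no_types, lifting) dvd_sum)
qed

lemma sum_rev_monom: "degree h \<le> N \<Longrightarrow>
  coeff (\<Sum>i\<le>N. monom (coeff h i) (N - i)) n = (if n \<le> N then coeff h (N - n) else 0)"
proof -
  assume "degree h \<le> N"
  have "coeff (\<Sum>i\<le>N. monom (coeff h i) (N - i)) n = (\<Sum>i\<le>N. if N - i = n then coeff h i else 0)"
    by (simp add: coeff_sum coeff_monom)
  also have "\<dots> = (\<Sum>i\<in>{..N} \<inter> {i. i = N - n \<and> n \<le> N}. coeff h i)"
    by (rule sum.inter_filter[symmetric, THEN trans]) (auto intro!: sum.cong)
  also have "\<dots> = (if n \<le> N then coeff h (N - n) else 0)"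
  proof (cases "n \<le> N")
    case True
    then have "{..N} \<inter> {i. i = N - n \<and> n \<le> N} = {N - n}" by auto
    then show ?thesis using True by simp
  qed simp
  finally show ?thesis .
qed

lemma reflect_sum: "reflect_poly h = (\<Sum>i\<le>degree h. monom (coeff h i) (degree h - i))"
  by (rule poly_eqI) (simp add: sum_rev_monom coeff_reflect_poly not_less)

lemma bar_sum: "bar m f = (\<Sum>i\<le>m. monom (coeff f i) (m - i))"
  by (simp add: bar_def)

lemma reflect_sg: "m \<ge> 1 \<Longrightarrow> (X m :: 'a::field poly) dvd monom 1 (degree h) * sg m h - reflect_poly h"
  using sg_G[of h "degree h" m] by (simp add: reflect_sum)

lemma bar_sg: "m \<ge> 1 \<Longrightarrow> degree f \<le> m \<Longrightarrow> (X m :: 'a::field poly) dvd bar m f - sg m f"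
proof -
  assume m: "m \<ge> 1" and d: "degree f \<le> m"
  have 1: "(X m :: 'a poly) dvd monom 1 m * sg m f - bar m f"
    using sg_G[OF d m] by (simp add: bar_sum)
  have "(X m :: 'a poly) dvd monom 1 m * sg m f - sg m f"
    using dvd_mult2[OF X_dvd_monom_diff[of m m 0], of "sg m f"]
    by (simp add: algebra_simps)
  then have "(X m :: 'a poly) dvd (monom 1 m * sg m f - sg m f) - (monom 1 m * sg m f - bar m f)"
    using 1 by (rule dvd_diff)
  then show ?thesis by simp
qed



definition T :: "nat \<Rightarrow> 'a::field poly \<Rightarrow> 'a" where
  "T m h = coeff (h mod X m) 0"

lemma T_add: "T m (a + b) = T m a + T m b" by (simp add: T_def poly_mod_add_left)
lemma T_diff: "T m (a - b) = T m a - T m b" by (simp add: T_def poly_mod_diff_left)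
lemma T_minus: "T m (- a) = - T m a" by (simp add: T_def)
lemma T_0[simp]: "T m 0 = 0" by (simp add: T_def)
lemma T_sum: "T m (sum f A) = (\<Sum>i\<in>A. T m (f i))"
  by (induction A rule: infinite_finite_induct) (simp_all add: T_add)
lemma T_cong: "X m dvd a - b \<Longrightarrow> T m a = T m b"
  by (simp add: T_def flip: mod_eq_dvd_iff)
lemma T_dvd: "X m dvd a \<Longrightarrow> T m a = 0"
  by (simp add: T_def)

lemma monom_mod_X:
  assumes "m \<ge> 1"
  shows "monom c e mod (X m :: 'a::field poly) = monom c (e mod m)"
proof -
  have "monom c e mod (X m :: 'a poly) = monom c (e mod m) mod X m"
    unfolding mod_eq_dvd_iff by (rule X_dvd_monom_diff_c) simp
  also have "\<dots> = monom c (e mod m)"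
  proof (rule mod_poly_less)
    have "degree (monom c (e mod m) :: 'a poly) \<le> e mod m" by (rule degree_monom_le)
    also have "e mod m < m" using assms by simp
    finally show "degree (monom c (e mod m) :: 'a poly) < degree (X m :: 'a poly)"
      using degree_X[OF assms, where 'a='a] by simp
  qed
  finally show ?thesis .
qed

lemma T_monom: "m \<ge> 1 \<Longrightarrow> T m (monom c e :: 'a::field poly) = (if m dvd e then c else 0)"
  by (simp add: T_def monom_mod_X coeff_monom dvd_eq_mod_eq_0)

lemma deg_mod_X: "m \<ge> 1 \<Longrightarrow> degree (u mod (X m :: 'a::field poly)) < m \<or> u mod X m = 0"
  using degree_mod_less[of "X m" u] X_ne0 degree_X by metis

lemma deg_mod_X': "m \<ge> 1 \<Longrightarrow> degree (u mod (X m :: 'a::field poly)) < m"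
  using deg_mod_X[of m u] by (cases "u mod X m = 0") auto

lemma dvd_cases_aux:
  assumes "i < m" "j < m" "(m::nat) dvd i + (m - j)"
  shows "i = j"
proof -
  obtain k where k: "i + (m - j) = m * k" using assms(3) by (elim dvdE)
  consider "k = 0" | "k = 1" | "k \<ge> 2" by linarith
  then show ?thesis
  proof cases
    case 1 then show ?thesis using k assms by simp
  next
    case 2 then show ?thesis using k assms by simp
  next
    case 3
    then have "m * 2 \<le> m * k" by (rule mult_le_mono2)
    then show ?thesis using k assms by linarith
  qed
qed

lemma EUC:
  fixes u w :: "'a::field poly"
  assumes m: "m \<ge> 1" and w: "degree w < m"
  shows "euc m (u mod X m) w = T m (u * bar m w)"
proof -
  define a where "a = u mod X m"
  have da: "degree a < m" using deg_mod_X'[OF m] a_def by simp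
  have am: "coeff a m = 0" using da by (simp add: coeff_eq_0)
  have wm: "coeff w m = 0" using w by (simp add: coeff_eq_0)
  have "T m (u * bar m w) = T m (a * bar m w)"
    by (rule T_cong) (simp add: a_def mod_mult_left_eq flip: mod_eq_dvd_iff)
  also have "a * bar m w = (\<Sum>j\<le>m. \<Sum>i\<le>m. monom (coeff a i * coeff w j) (i + (m - j)))"
    by (subst poly_as_sum_of_monoms'[of a m, symmetric], use da in simp)
       (simp add: bar_sum sum_distrib_left sum_distrib_right mult_monom)
  also have "T m \<dots> = (\<Sum>j\<le>m. \<Sum>i\<le>m. if m dvd i + (m - j) then coeff a i * coeff w j else 0)"
    by (simp add: T_sum T_monom[OF m])
  also have "\<dots> = (\<Sum>j\<le>m. \<Sum>i\<le>m. if j = i then coeff a i * coeff w j else 0)"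
  proof (intro sum.cong refl)
    fix i j assume i: "i \<in> {..m}" and j: "j \<in> {..m}"
    show "(if m dvd i + (m - j) then coeff a i * coeff w j else 0) =
          (if j = i then coeff a i * coeff w j else 0)"
    proof (cases "i = m \<or> j = m")
      case True then show ?thesis using am wm by auto
    next
      case False
      then have "i < m" "j < m" using i j by auto
      then show ?thesis using dvd_cases_aux[of i m j] by auto
    qed
  qed
  also have "\<dots> = (\<Sum>i\<le>m. coeff a i * coeff w i)"
    by (simp add: sum.delta)
  also have "\<dots> = (\<Sum>i<m. coeff a i * coeff w i)"
    using am by (simp add: lessThan_Suc_atMost[symmetric])
  finally show ?thesis by (simp add: euc_def a_def)
qed

lemma euc_monom: "j < m \<Longrightarrow> euc m a (monom 1 j) = coeff a j"
proof -
  assume j: "j < m"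
  have "euc m a (monom 1 j) = (\<Sum>i<m. if i = j then coeff a i else 0)"
    unfolding euc_def by (rule sum.cong) (auto simp: coeff_monom)
  also have "\<dots> = coeff a j" using j by (simp add: sum.delta)
  finally show ?thesis .
qed

lemma TALL:
  fixes h :: "'a::field poly"
  assumes m: "m \<ge> 1" and all: "\<And>a. T m (a * h) = 0"
  shows "X m dvd h"
proof -
  have c: "coeff (h mod X m) j = 0" for j
  proof (cases "j < m")
    case True
    have "coeff (h mod X m) j = euc m (h mod X m) (monom 1 j)" using True by (simp add: euc_monom)
    also have "\<dots> = T m (h * bar m (monom 1 j))"
      by (rule EUC[OF m]) (use True degree_monom_le le_less_trans in blast)
    also have "\<dots> = 0" using all by (metis mult.commute)
    finally show ?thesis .
  next
    case False
    then show ?thesis using deg_mod_X'[OF m, of h] by (simp add: coeff_eq_0)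
  qed
  then have "h mod X m = 0" by (simp add: poly_eq_iff)
  then show ?thesis by (simp add: mod_eq_0_iff_dvd)
qed

lemma symp_cw:
  assumes m: "m \<ge> 1" and v: "fst v \<in> Rm m" "snd v \<in> Rm m"
  shows "symp m ((a * g11) mod X m, (a * g12 + b * g22) mod X m) v
       = T m (a * (g11 * bar m (snd v) - g12 * bar m (fst v)) - b * (g22 * bar m (fst v)))"
proof -
  have "symp m ((a * g11) mod X m, (a * g12 + b * g22) mod X m) v =
     T m (a * g11 * bar m (snd v)) - T m ((a * g12 + b * g22) * bar m (fst v))"
    using v by (simp add: symp_def EUC[OF m] Rm_def)
  also have "\<dots> = T m (a * g11 * bar m (snd v) - (a * g12 + b * g22) * bar m (fst v))"
    by (simp add: T_diff)
  also have "a * g11 * bar m (snd v) - (a * g12 + b * g22) * bar m (fst v)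
     = a * (g11 * bar m (snd v) - g12 * bar m (fst v)) - b * (g22 * bar m (fst v))"
    by (simp add: algebra_simps)
  finally show ?thesis .
qed

lemma ORTH:
  fixes g11 g12 g22 :: "'a::field poly"
  assumes m: "m \<ge> 1" and v: "fst v \<in> Rm m" "snd v \<in> Rm m"
  shows "(\<forall>c\<in>qc_code m g11 g12 g22. symp m c v = 0) \<longleftrightarrow>
     X m dvd g22 * bar m (fst v) \<and> X m dvd g11 * bar m (snd v) - g12 * bar m (fst v)"
    (is "?L \<longleftrightarrow> X m dvd ?A \<and> X m dvd ?B")
proof
  assume L: ?L
  have mR: "a mod X m \<in> Rm m" for a :: "'a poly" using deg_mod_X'[OF m] by (simp add: Rm_def)
  have 0: "(0::'a poly) \<in> Rm m" using m by (simp add: Rm_def)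
  have Tz: "T m (a * ?B - b * ?A) = 0" if "a \<in> Rm m" "b \<in> Rm m" for a b
  proof -
    have "((a * g11) mod X m, (a * g12 + b * g22) mod X m) \<in> qc_code m g11 g12 g22"
      unfolding qc_code_def using that by blast
    then show ?thesis using L symp_cw[OF m v, of a g11 g12 b g22] by simp
  qed
  have modc: "T m (a * H) = T m ((a mod X m) * H)" for a H :: "'a poly"
    by (rule T_cong) (simp add: mod_mult_left_eq flip: mod_eq_dvd_iff)
  have "X m dvd ?B"
  proof (rule TALL[OF m])
    fix a
    have "T m ((a mod X m) * ?B - 0 * ?A) = 0" by (rule Tz[OF mR 0])
    then have "T m ((a mod X m) * ?B) = 0" by simp
    then show "T m (a * ?B) = 0" using modc[of a ?B] by simp
  qed
  moreover have "X m dvd ?A"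
  proof (rule TALL[OF m])
    fix a
    have "T m (0 * ?B - (a mod X m) * ?A) = 0" by (rule Tz[OF 0 mR])
    then have "T m ((a mod X m) * ?A) = 0" by (simp add: T_diff T_minus)
    then show "T m (a * ?A) = 0" using modc[of a ?A] by simp
  qed
  ultimately show "X m dvd ?A \<and> X m dvd ?B" by simp
next
  assume R: "X m dvd ?A \<and> X m dvd ?B"
  show ?L
  proof
    fix c assume "c \<in> qc_code m g11 g12 g22"
    then obtain a b where c: "c = ((a * g11) mod X m, (a * g12 + b * g22) mod X m)"
      unfolding qc_code_def by blast
    have "X m dvd a * ?B - b * ?A" using R by (simp add: dvd_diff)
    then have "T m (a * ?B - b * ?A) = 0" by (rule T_dvd)
    then show "symp m c v = 0" using c symp_cw[OF m v, of a g11 g12 b g22] by simp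
  qed
qed

definition Phi :: "nat \<Rightarrow> 'a::field poly \<Rightarrow> 'a poly \<Rightarrow> 'a poly \<Rightarrow> 'a poly \<Rightarrow> 'a poly \<Rightarrow> bool" where
  "Phi m g11 g12 g22 a b \<longleftrightarrow> X m dvd g22 * sg m (a * g11) \<and>
      X m dvd g11 * sg m (a * g12 + b * g22) - g12 * sg m (a * g11)"

lemma dvd_transfer: "X m dvd x - y \<Longrightarrow> X m dvd x \<longleftrightarrow> X m dvd (y :: 'a::field poly)"
proof -
  assume h: "X m dvd x - y"
  have "X m dvd (x - y) + y \<longleftrightarrow> X m dvd y" by (rule dvd_add_right_iff[OF h])
  then show ?thesis by simp
qed

lemma bar_mod_sg: "m \<ge> 1 \<Longrightarrow> X m dvd bar m (u mod X m) - sg m (u :: 'a::field poly)"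
proof -
  assume m: "m \<ge> 1"
  have 1: "X m dvd bar m (u mod X m) - sg m (u mod X m)"
    using bar_sg[OF m less_imp_le[OF deg_mod_X'[OF m, of u]]] .
  have "X m dvd (u mod X m) - u" by (simp flip: mod_eq_dvd_iff)
  then have 2: "X m dvd sg m (u mod X m) - sg m u" by (rule sg_cong)
  have "bar m (u mod X m) - sg m u = (bar m (u mod X m) - sg m (u mod X m)) + (sg m (u mod X m) - sg m u)"
    by simp
  then show ?thesis using 1 2 by (metis dvd_add)
qed

lemma cw_dual:
  fixes g11 g12 g22 :: "'a::field poly"
  assumes m: "m \<ge> 1"
  shows "((a * g11) mod X m, (a * g12 + b * g22) mod X m) \<in> symp_dual m (qc_code m g11 g12 g22)
     \<longleftrightarrow> Phi m g11 g12 g22 a b"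
proof -
  let ?v1 = "(a * g11) mod X m" and ?v2 = "(a * g12 + b * g22) mod X m"
  have R: "?v1 \<in> Rm m" "?v2 \<in> Rm m" using deg_mod_X'[OF m] by (auto simp: Rm_def)
  have e1: "X m dvd bar m ?v1 - sg m (a * g11)" by (rule bar_mod_sg[OF m])
  have e2: "X m dvd bar m ?v2 - sg m (a * g12 + b * g22)" by (rule bar_mod_sg[OF m])
  have A: "X m dvd g22 * bar m ?v1 \<longleftrightarrow> X m dvd g22 * sg m (a * g11)"
  proof (rule dvd_transfer)
    have "g22 * bar m ?v1 - g22 * sg m (a * g11) = g22 * (bar m ?v1 - sg m (a * g11))"
      by (simp add: right_diff_distrib)
    then show "X m dvd g22 * bar m ?v1 - g22 * sg m (a * g11)" using dvd_mult[OF e1, of g22] by simp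
  qed
  have B: "X m dvd g11 * bar m ?v2 - g12 * bar m ?v1 \<longleftrightarrow>
           X m dvd g11 * sg m (a * g12 + b * g22) - g12 * sg m (a * g11)"
  proof (rule dvd_transfer)
    have "g11 * bar m ?v2 - g12 * bar m ?v1 - (g11 * sg m (a * g12 + b * g22) - g12 * sg m (a * g11))
      = g11 * (bar m ?v2 - sg m (a * g12 + b * g22)) - g12 * (bar m ?v1 - sg m (a * g11))"
      by (simp add: algebra_simps)
    then show "X m dvd g11 * bar m ?v2 - g12 * bar m ?v1 - (g11 * sg m (a * g12 + b * g22) - g12 * sg m (a * g11))"
      using dvd_diff[OF dvd_mult[OF e2, of g11] dvd_mult[OF e1, of g12]] by simp
  qed
  have "((?v1, ?v2) \<in> symp_dual m (qc_code m g11 g12 g22)) \<longleftrightarrow>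
      (\<forall>c\<in>qc_code m g11 g12 g22. symp m c (?v1, ?v2) = 0)"
    unfolding symp_dual_def using R by simp
  also have "\<dots> \<longleftrightarrow> X m dvd g22 * bar m ?v1 \<and> X m dvd g11 * bar m ?v2 - g12 * bar m ?v1"
  proof -
    have R': "fst (?v1, ?v2) \<in> Rm m" "snd (?v1, ?v2) \<in> Rm m" using R by simp_all
    show ?thesis using ORTH[OF m R', of g11 g12 g22] unfolding fst_conv snd_conv .
  qed
  also have "\<dots> \<longleftrightarrow> Phi m g11 g12 g22 a b"
    unfolding Phi_def using A B by blast
  finally show ?thesis .
qed

lemma LCD_iff:
  fixes g11 g12 g22 :: "'a::field poly"
  assumes m: "m \<ge> 1"
  shows "symp_LCD m (qc_code m g11 g12 g22) \<longleftrightarrow>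
    (\<forall>a b. Phi m g11 g12 g22 a b \<longrightarrow> X m dvd a * g11 \<and> X m dvd a * g12 + b * g22)"
proof -
  let ?C = "qc_code m g11 g12 g22"
  have cwC: "((a * g11) mod X m, (a * g12 + b * g22) mod X m) \<in> ?C" for a b
  proof -
    have "((a mod X m) * g11) mod X m = (a * g11) mod X m" by (simp add: mod_mult_left_eq)
    moreover have "((a mod X m) * g12 + (b mod X m) * g22) mod X m = (a * g12 + b * g22) mod X m"
    proof -
      have "((a mod X m) * g12 + (b mod X m) * g22) mod X m =
         ((a mod X m * g12) mod X m + (b mod X m * g22) mod X m) mod X m" by (rule mod_add_eq[symmetric])
      also have "\<dots> = ((a*g12) mod X m + (b*g22) mod X m) mod X m" by (simp only: mod_mult_left_eq)
      also have "\<dots> = (a*g12+b*g22) mod X m" by (rule mod_add_eq)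
      finally show ?thesis .
    qed
    moreover have "a mod X m \<in> Rm m" "b mod X m \<in> Rm m" using deg_mod_X'[OF m] by (auto simp: Rm_def)
    ultimately show ?thesis unfolding qc_code_def mem_Collect_eq
      by (intro exI[of _ "a mod X m"] exI[of _ "b mod X m"]) simp
  qed
  have z: "(0, 0) \<in> ?C \<inter> symp_dual m ?C" using cwC[of 0 0] cw_dual[OF m, of 0 g11 g12 0 g22]
    by (simp add: Phi_def)
  have zz: "((a * g11) mod X m, (a * g12 + b * g22) mod X m) = (0, 0) \<longleftrightarrow>
     X m dvd a * g11 \<and> X m dvd a * g12 + b * g22" for a b
    by (simp add: mod_eq_0_iff_dvd)
  show ?thesis
  proof
    assume L: "symp_LCD m ?C"
    show "\<forall>a b. Phi m g11 g12 g22 a b \<longrightarrow> X m dvd a * g11 \<and> X m dvd a * g12 + b * g22"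
    proof (intro allI impI)
      fix a b assume "Phi m g11 g12 g22 a b"
      then have "((a * g11) mod X m, (a * g12 + b * g22) mod X m) \<in> ?C \<inter> symp_dual m ?C"
        using cwC cw_dual[OF m] by blast
      then show "X m dvd a * g11 \<and> X m dvd a * g12 + b * g22"
        using L zz unfolding symp_LCD_def by blast
    qed
  next
    assume R: "\<forall>a b. Phi m g11 g12 g22 a b \<longrightarrow> X m dvd a * g11 \<and> X m dvd a * g12 + b * g22"
    have "?C \<inter> symp_dual m ?C \<subseteq> {(0,0)}"
    proof
      fix v assume v: "v \<in> ?C \<inter> symp_dual m ?C"
      then obtain a b where c: "v = ((a * g11) mod X m, (a * g12 + b * g22) mod X m)"
        unfolding qc_code_def by blast
      then have "Phi m g11 g12 g22 a b" using v cw_dual[OF m] by blast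
      then show "v \<in> {(0,0)}" using R zz c by blast
    qed
    then show "symp_LCD m ?C" using z unfolding symp_LCD_def by blast
  qed
qed



lemma of_nat_card_zero: "of_nat (card (UNIV :: 'a set)) = (0 :: 'a::{ring_1,finite})"
proof -
  have "(\<Sum>x\<in>UNIV. x + 1) = (\<Sum>x\<in>(\<lambda>x. x + 1) ` UNIV. (x::'a))"
    by (subst sum.reindex) (auto intro: inj_onI)
  also have "(\<lambda>x. x + 1) ` UNIV = (UNIV :: 'a set)"
    by (auto intro!: image_eqI[of _ _ "_ - 1"])
  finally have "(\<Sum>x\<in>UNIV. (x::'a)) + of_nat (card (UNIV :: 'a set)) = (\<Sum>x\<in>UNIV. x)"
    by (simp add: sum.distrib)
  then show ?thesis by simp
qed

lemma of_nat_m_ne0: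
  assumes "coprime (card (UNIV :: 'a set)) m"
  shows "of_nat m \<noteq> (0 :: 'a::{field,finite})"
proof
  assume m0: "of_nat m = (0::'a)"
  have "gcd (int (card (UNIV :: 'a set))) (int m) = 1"
    using assms by (simp add: coprime_iff_gcd_eq_1 gcd_int_int_eq)
  then obtain u v where "u * int (card (UNIV :: 'a set)) + v * int m = 1"
    using bezout_int by metis
  then have "of_int (u * int (card (UNIV :: 'a set)) + v * int m) = (1::'a)" by simp
  then show False using m0 of_nat_card_zero[where 'a='a] by simp
qed

locale qcs =
  fixes m :: nat and dummy :: "'a::{field_gcd,finite} itself"
  assumes m1: "m \<ge> 1" and mchar: "of_nat m \<noteq> (0::'a)"
begin

abbreviation XX :: "'a poly" where "XX \<equiv> X m"

lemma XX_ne0: "XX \<noteq> 0" using X_ne0[OF m1] .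

lemma dvd_modX: "d dvd XX \<Longrightarrow> XX dvd a - b \<Longrightarrow> d dvd a \<longleftrightarrow> d dvd b"
  by (metis dvd_trans dvd_transfer[of m a b] dvd_add_right_iff diff_add_cancel)

lemma squarefree_X:
  assumes p: "prime_elem p" shows "\<not> p * p dvd XX"
proof
  assume "p * p dvd XX"
  then obtain k where k: "XX = p * p * k" by (elim dvdE)
  have "pderiv XX = p * (2 * pderiv p * k + p * pderiv k)"
    by (subst k) (simp add: pderiv_mult algebra_simps)
  then have "p dvd pderiv XX" by simp
  moreover have "pderiv XX = smult (of_nat m) (monom 1 (m - 1))"
    by (simp add: xm1_def pderiv_diff pderiv_monom smult_monom)
  ultimately have "p dvd monom 1 (m - 1)" using mchar dvd_smult_cancel by metis
  then have "p dvd monom 1 (m - 1) * monom 1 1" by simp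
  then have "p dvd monom 1 m" using m1 by (simp add: mult_monom)
  moreover have "p dvd XX" using k by simp
  ultimately have "p dvd monom 1 m - XX" by (rule dvd_diff)
  then have "p dvd 1" by (simp add: xm1_def)
  then show False using p prime_elem_not_unit by blast
qed

lemma loc:
  assumes "d dvd XX" and "\<And>p. prime_elem p \<Longrightarrow> p dvd d \<Longrightarrow> p dvd h"
  shows "d dvd h"
  using assms
proof (induction "degree d" arbitrary: d rule: less_induct)
  case less
  have d0: "d \<noteq> 0" using less.prems(1) XX_ne0 by auto
  show ?case
  proof (cases "is_unit d")
    case True then show ?thesis by (rule unit_imp_dvd)
  next
    case False
    obtain p where p: "p dvd d" "prime p" using prime_divisor_exists[OF d0 False] by blast
    have pe: "prime_elem p" using p(2) by simp
    obtain d' where d': "d = p * d'" using p(1) by (elim dvdE)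
    have p0: "p \<noteq> 0" "d' \<noteq> 0" using d0 d' by auto
    have "degree p \<noteq> 0" using pe p0 is_unit_iff_degree prime_elem_not_unit by blast
    then have deg: "degree d' < degree d" using d' p0 by (simp add: degree_mult_eq)
    have d'X: "d' dvd XX" using less.prems(1) d' by (metis dvd_mult_right)
    have "d' dvd h"
      by (rule less.hyps[OF deg d'X]) (use less.prems(2) d' in auto)
    then obtain k where k: "h = d' * k" by (elim dvdE)
    have "p dvd h" using less.prems(2)[OF pe p(1)] .
    moreover have "\<not> p dvd d'"
    proof
      assume "p dvd d'"
      then have "p * p dvd d" using d' by simp
      then show False using squarefree_X[OF pe] less.prems(1) dvd_trans by blast
    qed
    ultimately have "p dvd k" using k pe by (simp add: prime_elem_dvd_mult_iff)
    then show ?thesis using k d' by (metis mult_dvd_mono dvd_refl mult.commute)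
  qed
qed

lemma coeff0_ne: "p dvd XX \<Longrightarrow> coeff p 0 \<noteq> 0"
proof
  assume "p dvd XX" "coeff p 0 = 0"
  then obtain k where "XX = p * k" by (elim dvdE)
  then have "coeff XX 0 = coeff p 0 * coeff k 0" by (simp add: coeff_mult_0)
  then show False using \<open>coeff p 0 = 0\<close> coeff_X0[OF m1, where 'a='a] by simp
qed

lemma reflect_X: "reflect_poly XX = - XX"
proof (rule poly_eqI)
  fix n
  have dX: "degree XX = m" by (rule degree_X[OF m1])
  show "coeff (reflect_poly XX) n = coeff (- XX) n"
    using m1 unfolding coeff_reflect_poly dX by (auto simp: xm1_def coeff_monom)
qed

lemma reflect_dvd: "a dvd b \<Longrightarrow> reflect_poly a dvd reflect_poly (b :: 'a poly)"
  by (metis dvdE dvdI reflect_poly_mult)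

lemma reflect_dvd_X: "p dvd XX \<Longrightarrow> reflect_poly p dvd XX"
  using reflect_dvd[of p XX] reflect_X by simp

lemma prime_reflect:
  assumes p: "prime_elem p" and pX: "p dvd XX"
  shows "prime_elem (reflect_poly p)"
proof -
  have c0: "coeff p 0 \<noteq> 0" by (rule coeff0_ne[OF pX])
  have ip: "irreducible p" using p by (simp add: prime_elem_iff_irreducible)
  have "irreducible (reflect_poly p)"
  proof (rule irreducibleI)
    show "reflect_poly p \<noteq> 0" using ip by auto
    show "\<not> is_unit (reflect_poly p)"
    proof
      assume "is_unit (reflect_poly p)"
      then have "is_unit (reflect_poly (reflect_poly p))" by (metis reflect_poly_1 reflect_dvd)
      then show False using c0 ip by (simp add: irreducible_def)
    qed
    fix a b assume ab: "reflect_poly p = a * b"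
    have "lead_coeff p = coeff a 0 * coeff b 0" using ab
      by (metis coeff_0_reflect_poly coeff_mult_0)
    then have a0: "coeff a 0 \<noteq> 0" and b0: "coeff b 0 \<noteq> 0" using ip by auto
    have "p = reflect_poly a * reflect_poly b" using ab c0
      by (metis reflect_poly_mult reflect_poly_reflect_poly)
    then have "is_unit (reflect_poly a) \<or> is_unit (reflect_poly b)" using ip
      by (simp add: irreducible_def)
    then show "is_unit a \<or> is_unit b"
    proof
      assume "is_unit (reflect_poly a)"
      then have "is_unit (reflect_poly (reflect_poly a))" by (metis reflect_poly_1 reflect_dvd)
      then show ?thesis using a0 by simp
    next
      assume "is_unit (reflect_poly b)"
      then have "is_unit (reflect_poly (reflect_poly b))" by (metis reflect_poly_1 reflect_dvd)
      then show ?thesis using b0 by simp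
    qed
  qed
  then show ?thesis by (simp add: prime_elem_iff_irreducible)
qed

lemma reflect_reflect_X: "p dvd XX \<Longrightarrow> reflect_poly (reflect_poly p) = p"
  using coeff0_ne by simp

lemma dvd_reflect_iff:
  assumes "p dvd XX" "h dvd XX"
  shows "p dvd reflect_poly h \<longleftrightarrow> reflect_poly p dvd h"
proof
  assume "p dvd reflect_poly h"
  then have "reflect_poly p dvd reflect_poly (reflect_poly h)" by (rule reflect_dvd)
  then show "reflect_poly p dvd h" using reflect_reflect_X[OF assms(2)] by simp
next
  assume "reflect_poly p dvd h"
  then have "reflect_poly (reflect_poly p) dvd reflect_poly h" by (rule reflect_dvd)
  then show "p dvd reflect_poly h" using reflect_reflect_X[OF assms(1)] by simp
qed

lemma sg_dvd_iff:
  assumes fX: "f dvd XX"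
  shows "f dvd sg m h \<longleftrightarrow> reflect_poly f dvd h"
proof -
  define d where "d = degree f"
  have RF: "XX dvd monom 1 d * sg m f - reflect_poly f" unfolding d_def by (rule reflect_sg[OF m1])
  have rX: "reflect_poly f dvd XX" by (rule reflect_dvd_X[OF fX])
  show ?thesis
  proof
    assume "f dvd sg m h"
    then obtain k where k: "sg m h = f * k" by (elim dvdE)
    have "reflect_poly f dvd sg m f"
    proof -
      have e: "sg m f = (sg m f - monom 1 (m * d) * sg m f)
               + monom 1 ((m - 1) * d) * (monom 1 d * sg m f - reflect_poly f)
               + monom 1 ((m - 1) * d) * reflect_poly f"
        using m1 by (simp add: algebra_simps mult_monom diff_mult_distrib add_mult_distrib mult.commute)
      have "XX dvd monom 1 (m * d) - monom 1 0" by (rule X_dvd_monom_diff) simp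
      then have "XX dvd (monom 1 (m * d) - 1) * sg m f" by (simp add: monom_0 one_pCons)
      then have 1: "XX dvd sg m f - monom 1 (m * d) * sg m f"
        by (metis dvd_minus_iff minus_diff_eq left_diff_distrib mult_1)
      have big: "reflect_poly f dvd (sg m f - monom 1 (m * d) * sg m f)
               + monom 1 ((m - 1) * d) * (monom 1 d * sg m f - reflect_poly f)
               + monom 1 ((m - 1) * d) * reflect_poly f"
        using dvd_trans[OF rX 1] dvd_trans[OF rX RF]
        by (intro dvd_add) simp_all
      show ?thesis by (subst e) (rule big)
    qed
    then have "reflect_poly f dvd sg m (sg m h)" using k by (simp add: sg_mult)
    then show "reflect_poly f dvd h" using dvd_modX[OF rX sg_sg[OF m1, of h]] by simp
  next
    assume "reflect_poly f dvd h"
    then obtain k where k: "h = reflect_poly f * k" by (elim dvdE)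
    have "f dvd sg m (reflect_poly f)"
    proof -
      have 1: "XX dvd sg m (monom 1 d * sg m f) - sg m (reflect_poly f)"
        by (rule sg_cong[OF RF])
      have 2: "XX dvd sg m (monom 1 d) * (sg m (sg m f) - f)"
        using sg_sg[OF m1, of f] by simp
      have c1: "f dvd sg m (reflect_poly f) - sg m (monom 1 d * sg m f)"
        using dvd_trans[OF fX 1] by (metis dvd_minus_iff minus_diff_eq)
      have e: "sg m (reflect_poly f) = (sg m (reflect_poly f) - sg m (monom 1 d * sg m f))
                + sg m (monom 1 d) * (sg m (sg m f) - f) + sg m (monom 1 d) * f"
        by (simp add: sg_mult algebra_simps)
      have big: "f dvd (sg m (reflect_poly f) - sg m (monom 1 d * sg m f))
                + sg m (monom 1 d) * (sg m (sg m f) - f) + sg m (monom 1 d) * f"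
        using c1 dvd_trans[OF fX 2] by (intro dvd_add) simp_all
      show ?thesis by (subst e) (rule big)
    qed
    then show "f dvd sg m h" using k by (simp add: sg_mult)
  qed
qed

end


context qcs begin

lemma not_sq_dvd: "prime_elem p \<Longrightarrow> p * p dvd h \<Longrightarrow> h dvd XX \<Longrightarrow> False"
  using squarefree_X dvd_trans by blast

lemma prime_in_prod: "prime_elem p \<Longrightarrow> p dvd a * b \<longleftrightarrow> p dvd a \<or> p dvd b"
  by (rule prime_elem_dvd_mult_iff)

lemma gcd_one_iff:
  assumes "a \<noteq> 0"
  shows "gcd a b = 1 \<longleftrightarrow> (\<forall>p. prime_elem p \<longrightarrow> p dvd a \<longrightarrow> \<not> p dvd (b :: 'a poly))"
proof
  assume g: "gcd a b = 1"
  show "\<forall>p. prime_elem p \<longrightarrow> p dvd a \<longrightarrow> \<not> p dvd b"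
  proof (intro allI impI notI)
    fix p assume "prime_elem p" "p dvd a" "p dvd b"
    then have "p dvd gcd a b" by simp
    then show False using g \<open>prime_elem p\<close> prime_elem_not_unit by simp
  qed
next
  assume R: "\<forall>p. prime_elem p \<longrightarrow> p dvd a \<longrightarrow> \<not> p dvd b"
  show "gcd a b = 1"
  proof (rule ccontr)
    assume "gcd a b \<noteq> 1"
    then have nu: "\<not> is_unit (gcd a b)"
      by (metis is_unit_gcd_iff coprime_iff_gcd_eq_1)
    have "gcd a b \<noteq> 0" using assms by simp
    then obtain p where "p dvd gcd a b" "prime p" using prime_divisor_exists nu by blast
    then show False using R by (auto simp: prime_def)
  qed
qed

lemma self_rec_iff:
  assumes hX: "h dvd XX"
  shows "self_reciprocal h \<longleftrightarrow> (\<forall>p. prime_elem p \<longrightarrow> p dvd h \<longrightarrow> reflect_poly p dvd h)"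
proof
  assume "self_reciprocal h"
  then obtain \<alpha> where h0: "h \<noteq> 0" and r: "reflect_poly h = smult \<alpha> h"
    unfolding self_reciprocal_def by blast
  have a0: "\<alpha> \<noteq> 0" using r h0 by (metis reflect_poly_eq_0_iff smult_0_left)
  show "\<forall>p. prime_elem p \<longrightarrow> p dvd h \<longrightarrow> reflect_poly p dvd h"
  proof (intro allI impI)
    fix p assume "prime_elem p" "p dvd h"
    then have "reflect_poly p dvd smult \<alpha> h" using r reflect_dvd by metis
    then show "reflect_poly p dvd h" using a0 dvd_smult_cancel by blast
  qed
next
  assume R: "\<forall>p. prime_elem p \<longrightarrow> p dvd h \<longrightarrow> reflect_poly p dvd h"
  have h0: "h \<noteq> 0" using hX XX_ne0 by auto
  have rX: "reflect_poly h dvd XX" by (rule reflect_dvd_X[OF hX])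
  have 1: "h dvd reflect_poly h"
  proof (rule loc[OF hX])
    fix p assume "prime_elem p" "p dvd h"
    then show "p dvd reflect_poly h"
      using R dvd_reflect_iff[OF dvd_trans[OF \<open>p dvd h\<close> hX] hX] by blast
  qed
  have 2: "reflect_poly h dvd h"
  proof (rule loc[OF rX])
    fix s assume s: "prime_elem s" "s dvd reflect_poly h"
    have sX: "s dvd XX" using s(2) rX dvd_trans by blast
    have "reflect_poly s dvd h" using s(2) dvd_reflect_iff[OF sX hX] by blast
    moreover have "prime_elem (reflect_poly s)" by (rule prime_reflect[OF s(1) sX])
    ultimately have "reflect_poly (reflect_poly s) dvd h" using R by blast
    then show "s dvd h" using reflect_reflect_X[OF sX] by simp
  qed
  obtain k where k: "reflect_poly h = h * k" using 1 by (elim dvdE)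
  obtain k' where k': "h = reflect_poly h * k'" using 2 by (elim dvdE)
  have "h * 1 = h * (k * k')" using k k' by (metis mult.assoc mult_1_right)
  then have "k * k' = 1" using h0 by (metis mult_left_cancel)
  then have "is_unit k" by (metis dvd_triv_left)
  then obtain c where "k = [:c:]" using is_unit_poly_iff by blast
  then have "reflect_poly h = smult c h" using k by simp
  then show "self_reciprocal h" unfolding self_reciprocal_def using h0 by blast
qed

end

locale qc = qcs m dummy for m and dummy :: "'a::{field_gcd,finite} itself" +
  fixes g11 g12 g22 :: "'a::{field_gcd,finite} poly"
  assumes d11: "g11 dvd XX" and d22: "g22 dvd XX"
    and deg12: "g12 = 0 \<or> degree g12 < degree g22"
    and dprod: "g11 * g22 dvd XX * g12"
begin

abbreviation "gg \<equiv> gcd g11 g22"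
abbreviation "ll \<equiv> XX div lcm g11 g22"
abbreviation "h1 \<equiv> g11 div gcd g11 g22"
abbreviation "h2 \<equiv> g22 div gcd g11 g22"
abbreviation "DD \<equiv> g11 * bar m g12 - g12 * bar m g11"
abbreviation "Ds \<equiv> g11 * sg m g12 - g12 * sg m g11"

lemma g11_0: "g11 \<noteq> 0" using d11 XX_ne0 by auto
lemma g22_0: "g22 \<noteq> 0" using d22 XX_ne0 by auto

lemma g11_fac: "g11 = gg * h1" by simp
lemma g22_fac: "g22 = gg * h2" by simp
lemma lcmX: "lcm g11 g22 dvd XX" using d11 d22 by (rule lcm_least)
lemma X_fac: "XX = ll * lcm g11 g22" using lcmX by simp

lemma h1X: "h1 dvd XX" using d11 g11_fac by (metis dvd_triv_right dvd_trans)
lemma h2X: "h2 dvd XX" using d22 g22_fac by (metis dvd_triv_right dvd_trans)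
lemma ggX: "gg dvd XX" using d11 by (metis gcd_dvd1 dvd_trans)
lemma llX: "ll dvd XX" using X_fac by (metis dvd_triv_left)

lemma P_gg: "p dvd gg \<longleftrightarrow> p dvd g11 \<and> p dvd g22" by simp

lemma P_h1: assumes "prime_elem p" shows "p dvd h1 \<longleftrightarrow> p dvd g11 \<and> \<not> p dvd g22"
proof
  assume h: "p dvd h1"
  then have a: "p dvd g11" by (metis g11_fac dvd_mult)
  have "\<not> p dvd g22"
  proof
    assume "p dvd g22"
    then have "p dvd gg" using a by simp
    then have "p * p dvd gg * h1" using h by (rule mult_dvd_mono)
    then show False using not_sq_dvd[OF assms _ d11] g11_fac by metis
  qed
  then show "p dvd g11 \<and> \<not> p dvd g22" using a by simp
next
  assume "p dvd g11 \<and> \<not> p dvd g22"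
  then show "p dvd h1" using g11_fac assms by (metis P_gg prime_elem_dvd_mult_iff)
qed

lemma P_h2: assumes "prime_elem p" shows "p dvd h2 \<longleftrightarrow> \<not> p dvd g11 \<and> p dvd g22"
proof
  assume h: "p dvd h2"
  then have a: "p dvd g22" by (metis g22_fac dvd_mult)
  have "\<not> p dvd g11"
  proof
    assume "p dvd g11"
    then have "p dvd gg" using a by simp
    then have "p * p dvd gg * h2" using h by (rule mult_dvd_mono)
    then show False using not_sq_dvd[OF assms _ d22] g22_fac by metis
  qed
  then show "\<not> p dvd g11 \<and> p dvd g22" using a by simp
next
  assume "\<not> p dvd g11 \<and> p dvd g22"
  then show "p dvd h2" using g22_fac assms by (metis P_gg prime_elem_dvd_mult_iff)
qed

lemma lcm_prime: assumes "prime_elem p" shows "p dvd lcm g11 g22 \<longleftrightarrow> p dvd g11 \<or> p dvd g22"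
proof
  assume "p dvd lcm g11 g22"
  moreover have "lcm g11 g22 dvd g11 * g22"
    by (metis gcd_mult_lcm dvd_triv_right normalize_mult dvd_normalize_iff)
  ultimately have "p dvd g11 * g22" by (rule dvd_trans)
  then show "p dvd g11 \<or> p dvd g22" using assms by (simp add: prime_elem_dvd_mult_iff)
next
  assume "p dvd g11 \<or> p dvd g22"
  then show "p dvd lcm g11 g22" by (metis dvd_lcm1 dvd_lcm2 dvd_trans)
qed

lemma P_ll: assumes "prime_elem p" "p dvd XX"
  shows "p dvd ll \<longleftrightarrow> \<not> p dvd g11 \<and> \<not> p dvd g22"
proof
  assume h: "p dvd ll"
  have "\<not> p dvd lcm g11 g22"
  proof
    assume "p dvd lcm g11 g22"
    then have "p * p dvd ll * lcm g11 g22" using h by (metis mult_dvd_mono mult.commute)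
    then show False using not_sq_dvd[OF assms(1) _ dvd_refl] X_fac by metis
  qed
  then show "\<not> p dvd g11 \<and> \<not> p dvd g22" using lcm_prime[OF assms(1)] by simp
next
  assume "\<not> p dvd g11 \<and> \<not> p dvd g22"
  then have "\<not> p dvd lcm g11 g22" using lcm_prime[OF assms(1)] by simp
  then show "p dvd ll" using assms X_fac by (metis prime_elem_dvd_mult_iff)
qed

lemma P_g12: assumes "prime_elem p" "p dvd g11" "p dvd g22" shows "p dvd g12"
proof (rule ccontr)
  assume "\<not> p dvd g12"
  then have "coprime p g12" by (rule prime_elem_imp_coprime[OF assms(1)])
  then have c: "coprime (p * p) g12" by simp
  have "p * p dvd g11 * g22" using assms by (simp add: mult_dvd_mono)
  then have "p * p dvd XX * g12" using dprod dvd_trans by blast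
  then have "p * p dvd XX" using c coprime_dvd_mult_left_iff by blast
  then show False using not_sq_dvd[OF assms(1) _ dvd_refl] by blast
qed

lemma DD_Ds: "XX dvd DD - Ds"
proof -
  have dg11: "degree g11 \<le> m" using dvd_imp_degree_le[OF d11 XX_ne0] degree_X[OF m1, where 'a='a] by simp
  have dg22: "degree g22 \<le> m" using dvd_imp_degree_le[OF d22 XX_ne0] degree_X[OF m1, where 'a='a] by simp
  have dg12: "degree g12 \<le> m" using deg12 dg22 by auto
  have 1: "XX dvd bar m g12 - sg m g12" by (rule bar_sg[OF m1 dg12])
  have 2: "XX dvd bar m g11 - sg m g11" by (rule bar_sg[OF m1 dg11])
  have "DD - Ds = g11 * (bar m g12 - sg m g12) - g12 * (bar m g11 - sg m g11)"
    by (simp add: algebra_simps)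
  then show ?thesis using dvd_diff[OF dvd_mult[OF 1, of g11] dvd_mult[OF 2, of g12]] by simp
qed

lemma sg_Ds: "XX dvd sg m Ds + Ds"
proof -
  have "sg m Ds + Ds = sg m g11 * (sg m (sg m g12) - g12) - sg m g12 * (sg m (sg m g11) - g11)"
    by (simp add: sg_diff sg_mult algebra_simps)
  then show ?thesis
    using dvd_diff[OF dvd_mult[OF sg_sg[OF m1, of g12], of "sg m g11"] dvd_mult[OF sg_sg[OF m1, of g11], of "sg m g12"]]
    by simp
qed

lemma Ds_refl: assumes "p dvd XX" shows "reflect_poly p dvd Ds \<longleftrightarrow> p dvd Ds"
proof -
  have "reflect_poly p dvd Ds \<longleftrightarrow> p dvd sg m Ds" using sg_dvd_iff[OF assms] by simp
  also have "\<dots> \<longleftrightarrow> p dvd - Ds"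
  proof (rule dvd_modX[OF assms])
    show "XX dvd sg m Ds - (- Ds)" using sg_Ds by (simp only: diff_minus_eq_add)
  qed
  finally show ?thesis by (simp only: dvd_minus_iff)
qed

lemma DD_iff: "p dvd XX \<Longrightarrow> p dvd DD \<longleftrightarrow> p dvd Ds"
  using dvd_modX DD_Ds by blast

end


context qc begin

lemma h1_0: "h1 \<noteq> 0" using h1X XX_ne0 by auto
lemma h2_0: "h2 \<noteq> 0" using h2X XX_ne0 by auto

lemma c1: "self_reciprocal gg \<longleftrightarrow> (\<forall>p. prime_elem p \<longrightarrow> p dvd XX \<longrightarrow> (p dvd gg \<longrightarrow> reflect_poly p dvd gg))"
  using self_rec_iff[OF ggX] ggX dvd_trans by blast

lemma c2: "self_reciprocal ll \<longleftrightarrow> (\<forall>p. prime_elem p \<longrightarrow> p dvd XX \<longrightarrow> (p dvd ll \<longrightarrow> reflect_poly p dvd ll))"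
  using self_rec_iff[OF llX] llX dvd_trans by blast

lemma c3: "gcd h1 (reflect_poly h1) = 1 \<longleftrightarrow>
   (\<forall>p. prime_elem p \<longrightarrow> p dvd XX \<longrightarrow> \<not> (p dvd h1 \<and> reflect_poly p dvd h1))"
proof -
  have "gcd h1 (reflect_poly h1) = 1 \<longleftrightarrow> (\<forall>p. prime_elem p \<longrightarrow> p dvd h1 \<longrightarrow> \<not> p dvd reflect_poly h1)"
    by (rule gcd_one_iff[OF h1_0])
  also have "\<dots> \<longleftrightarrow> (\<forall>p. prime_elem p \<longrightarrow> p dvd XX \<longrightarrow> \<not> (p dvd h1 \<and> reflect_poly p dvd h1))"
    using dvd_reflect_iff[OF _ h1X] h1X dvd_trans by blast
  finally show ?thesis .
qed

lemma c4: "gcd (gcd h2 (reflect_poly h2)) DD = 1 \<longleftrightarrow>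
   (\<forall>p. prime_elem p \<longrightarrow> p dvd XX \<longrightarrow> \<not> (p dvd h2 \<and> reflect_poly p dvd h2 \<and> p dvd DD))"
proof -
  have "gcd h2 (reflect_poly h2) \<noteq> 0" using h2_0 by simp
  then have "gcd (gcd h2 (reflect_poly h2)) DD = 1 \<longleftrightarrow>
     (\<forall>p. prime_elem p \<longrightarrow> p dvd gcd h2 (reflect_poly h2) \<longrightarrow> \<not> p dvd DD)"
    by (rule gcd_one_iff)
  also have "\<dots> \<longleftrightarrow> (\<forall>p. prime_elem p \<longrightarrow> p dvd XX \<longrightarrow> \<not> (p dvd h2 \<and> reflect_poly p dvd h2 \<and> p dvd DD))"
    using dvd_reflect_iff[OF _ h2X] h2X dvd_trans by auto
  finally show ?thesis .
qed

definition Lc :: "'a poly \<Rightarrow> bool" where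
  "Lc p \<longleftrightarrow> (p dvd gg \<longrightarrow> reflect_poly p dvd gg) \<and> (p dvd ll \<longrightarrow> reflect_poly p dvd ll)
     \<and> \<not> (p dvd h1 \<and> reflect_poly p dvd h1) \<and> \<not> (p dvd h2 \<and> reflect_poly p dvd h2 \<and> p dvd DD)"

lemma Cond_iff: "(self_reciprocal gg \<and> self_reciprocal ll \<and> gcd h1 (reflect_poly h1) = 1
    \<and> gcd (gcd h2 (reflect_poly h2)) DD = 1) \<longleftrightarrow> (\<forall>p. prime_elem p \<longrightarrow> p dvd XX \<longrightarrow> Lc p)"
  unfolding c1 c2 c3 c4 Lc_def by blast

end


context qc begin

abbreviation "PH a b \<equiv> Phi m g11 g12 g22 a b"

lemma sgp: assumes "prime_elem p" "p dvd XX"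
  shows "reflect_poly p dvd sg m u \<longleftrightarrow> p dvd u"
  using sg_dvd_iff[OF reflect_dvd_X[OF assms(2)], of u] reflect_reflect_X[OF assms(2)] by simp

lemma local_both:
  assumes all: "\<forall>p. prime_elem p \<longrightarrow> p dvd XX \<longrightarrow> Lc p"
    and ph: "PH a b" and p: "prime_elem p" and pX: "p dvd XX"
  shows "p dvd a * g11 \<and> p dvd a * g12 + b * g22"
proof -
  define q where "q = reflect_poly p"
  have qe: "prime_elem q" unfolding q_def by (rule prime_reflect[OF p pX])
  have qX: "q dvd XX" unfolding q_def by (rule reflect_dvd_X[OF pX])
  have rq: "reflect_poly q = p" unfolding q_def by (rule reflect_reflect_X[OF pX])
  have S: "q dvd sg m u \<longleftrightarrow> p dvd u" for u unfolding q_def by (rule sgp[OF p pX])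
  have Lp: "Lc p" using all p pX by blast
  have Lq: "Lc q" using all qe qX by blast
  have ph1: "q dvd g22 * sg m (a * g11)" using ph qX unfolding Phi_def by (metis dvd_trans)
  have ph2: "q dvd g11 * sg m (a * g12 + b * g22) - g12 * sg m (a * g11)"
    using ph qX unfolding Phi_def by (metis dvd_trans)
  have sw: "q dvd g11 * sg m (a * g12 + b * g22)" if "q dvd sg m (a * g11)"
  proof -
    have "q dvd (g11 * sg m (a * g12 + b * g22) - g12 * sg m (a * g11)) + g12 * sg m (a * g11)"
      using ph2 that by (intro dvd_add) simp_all
    then show ?thesis by simp
  qed
  consider "p dvd g11" "p dvd g22" | "\<not> p dvd g11" "\<not> p dvd g22"
    | "p dvd g11" "\<not> p dvd g22" | "\<not> p dvd g11" "p dvd g22" by blast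
  then show ?thesis
  proof cases
    case 1
    then have "p dvd g12" by (rule P_g12[OF p])
    then show ?thesis using 1 by simp
  next
    case 2
    then have "p dvd ll" using P_ll[OF p pX] by simp
    then have "q dvd ll" using Lp unfolding Lc_def q_def by blast
    then have nq: "\<not> q dvd g11" "\<not> q dvd g22" using P_ll[OF qe qX] by auto
    have "q dvd sg m (a * g11)" using ph1 nq qe by (simp add: prime_elem_dvd_mult_iff)
    then have 1: "p dvd a * g11" using S by simp
    have "q dvd sg m (a * g12 + b * g22)" using sw[OF \<open>q dvd sg m (a * g11)\<close>] nq qe
      by (simp add: prime_elem_dvd_mult_iff)
    then have "p dvd a * g12 + b * g22" using S by simp
    then show ?thesis using 1 by simp
  next
    case 3
    then have 1: "p dvd a * g11" by simp
    have "p dvd h1" using P_h1[OF p] 3 by simp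
    then have "\<not> q dvd h1" using Lp unfolding Lc_def q_def by blast
    moreover have "\<not> q dvd gg"
    proof
      assume "q dvd gg"
      then have "p dvd gg" using Lq rq unfolding Lc_def by auto
      then show False using 3 by simp
    qed
    ultimately have nq: "\<not> q dvd g11" using P_h1[OF qe] by auto
    have "q dvd sg m (a * g11)" using S 1 by simp
    then have "q dvd sg m (a * g12 + b * g22)" using sw nq qe by (simp add: prime_elem_dvd_mult_iff)
    then show ?thesis using S 1 by simp
  next
    case 4
    have "p dvd a"
    proof (cases "q dvd g22")
      case False
      then have "q dvd sg m (a * g11)" using ph1 qe by (simp add: prime_elem_dvd_mult_iff)
      then have "p dvd a * g11" using S by simp
      then show ?thesis using 4 p by (simp add: prime_elem_dvd_mult_iff)
    next
      case True
      have nq: "\<not> q dvd g11"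
      proof
        assume "q dvd g11"
        then have "q dvd gg" using True by simp
        then have "p dvd gg" using Lq rq unfolding Lc_def by auto
        then show False using 4 by simp
      qed
      have "p dvd h2" "q dvd h2" using P_h2[OF p] P_h2[OF qe] 4 True nq by auto
      then have "\<not> p dvd DD" using Lp unfolding Lc_def q_def by blast
      then have "\<not> p dvd Ds" using DD_iff[OF pX] by simp
      then have nDs: "\<not> q dvd Ds" using Ds_refl[OF pX] unfolding q_def by simp
      have e: "g11 * sg m (a * g12 + b * g22) - g12 * sg m (a * g11)
             = sg m a * Ds + sg m b * (g11 * sg m g22)"
        by (simp add: sg_mult sg_add algebra_simps)
      have "q dvd sg m g22" using S 4 by simp
      then have "q dvd sg m b * (g11 * sg m g22)" by simp
      moreover have "q dvd sg m a * Ds + sg m b * (g11 * sg m g22)" using ph2 e by simp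
      ultimately have "q dvd sg m a * Ds" by (metis dvd_add_left_iff)
      then have "q dvd sg m a" using nDs qe by (simp add: prime_elem_dvd_mult_iff)
      then show ?thesis using S by simp
    qed
    then show ?thesis using 4 by simp
  qed
qed

lemma sufficient:
  assumes all: "\<forall>p. prime_elem p \<longrightarrow> p dvd XX \<longrightarrow> Lc p"
  shows "\<forall>a b. PH a b \<longrightarrow> XX dvd a * g11 \<and> XX dvd a * g12 + b * g22"
proof (intro allI impI conjI)
  fix a b assume ph: "PH a b"
  show "XX dvd a * g11" by (rule loc[OF dvd_refl]) (use local_both[OF all ph] in blast)
  show "XX dvd a * g12 + b * g22" by (rule loc[OF dvd_refl]) (use local_both[OF all ph] in blast)
qed

end


context qc begin

lemma Wprop:
  assumes f: "prime_elem f" "f dvd XX" and r: "prime_elem r" "r dvd XX"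
  shows "f dvd sg m (XX div r) \<or> f dvd reflect_poly r"
proof (cases "reflect_poly f dvd XX div r")
  case True
  then show ?thesis using sg_dvd_iff[OF f(2)] by blast
next
  case False
  have rf: "prime_elem (reflect_poly f)" by (rule prime_reflect[OF f])
  have "reflect_poly f dvd r * (XX div r)" using reflect_dvd_X[OF f(2)] r(2) by simp
  then have "reflect_poly f dvd r" using False rf by (simp add: prime_elem_dvd_mult_iff)
  then have "reflect_poly (reflect_poly f) dvd reflect_poly r" by (rule reflect_dvd)
  then show ?thesis using reflect_reflect_X[OF f(2)] by simp
qed

lemma notE: assumes r: "prime_elem r" "r dvd XX" shows "\<not> r dvd XX div r"
proof
  assume "r dvd XX div r"
  then have "r * r dvd r * (XX div r)" by simp
  then show False using not_sq_dvd[OF r(1) _ dvd_refl] r(2) by simp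
qed

lemma via_primes:
  assumes r: "prime_elem r" "r dvd XX"
    and H: "\<And>f. prime_elem f \<Longrightarrow> f dvd XX \<Longrightarrow> f dvd reflect_poly r \<Longrightarrow> f dvd Q"
  shows "XX dvd sg m (XX div r) * Q"
proof (rule loc[OF dvd_refl])
  fix f assume f: "prime_elem f" "f dvd XX"
  then show "f dvd sg m (XX div r) * Q" using Wprop[OF f r] H[OF f] by auto
qed

lemma WA:
  assumes Hy: "\<forall>a b. PH a b \<longrightarrow> XX dvd a * g11 \<and> XX dvd a * g12 + b * g22"
    and r: "prime_elem r" "r dvd XX" and a1: "reflect_poly r dvd g11" and a2: "\<not> r dvd g22"
  shows False
proof -
  let ?E = "XX div r"
  have "XX dvd sg m ?E * (g11 * sg m g22)"
    by (rule via_primes[OF r]) (use a1 dvd_trans in auto)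
  then have "PH 0 ?E" unfolding Phi_def by (simp add: sg_mult algebra_simps)
  then have "XX dvd 0 * g12 + ?E * g22" using Hy by blast
  then have "XX dvd ?E * g22" by simp
  then have "r dvd ?E * g22" using r(2) dvd_trans by blast
  then show False using notE[OF r] a2 r(1) by (simp add: prime_elem_dvd_mult_iff)
qed

lemma WB:
  assumes Hy: "\<forall>a b. PH a b \<longrightarrow> XX dvd a * g11 \<and> XX dvd a * g12 + b * g22"
    and r: "prime_elem r" "r dvd XX" and a1: "reflect_poly r dvd g22" and a2: "reflect_poly r dvd Ds"
    and a3: "\<not> r dvd g11"
  shows False
proof -
  let ?E = "XX div r"
  have 1: "XX dvd sg m ?E * (g22 * sg m g11)"
    by (rule via_primes[OF r]) (use a1 dvd_trans in auto)
  have 2: "XX dvd sg m ?E * Ds"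
    by (rule via_primes[OF r]) (use a2 dvd_trans in auto)
  have "PH ?E 0" unfolding Phi_def
  proof
    show "XX dvd g22 * sg m (?E * g11)" using 1 by (simp add: sg_mult algebra_simps)
    have "g11 * sg m (?E * g12 + 0 * g22) - g12 * sg m (?E * g11) = sg m ?E * Ds"
      by (simp add: sg_mult algebra_simps)
    then show "XX dvd g11 * sg m (?E * g12 + 0 * g22) - g12 * sg m (?E * g11)" using 2 by simp
  qed
  then have "XX dvd ?E * g11" using Hy by blast
  then have "r dvd ?E * g11" using r(2) dvd_trans by blast
  then show False using notE[OF r] a3 r(1) by (simp add: prime_elem_dvd_mult_iff)
qed

lemma WC:
  assumes Hy: "\<forall>a b. PH a b \<longrightarrow> XX dvd a * g11 \<and> XX dvd a * g12 + b * g22"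
    and r: "prime_elem r" "r dvd XX" and a1: "reflect_poly r dvd g22" and a2: "\<not> reflect_poly r dvd g11"
    and a3: "\<not> r dvd g11" and a4: "\<not> r dvd g22"
  shows False
proof -
  let ?E = "XX div r"
  define a where "a = sg m g11 * g22 * ?E"
  define b where "b = - (sg m Ds * ?E)"
  have 1: "XX dvd sg m ?E * (g22 * (sg m (sg m g11) * sg m g22 * sg m g11))"
    by (rule via_primes[OF r]) (use a1 dvd_trans in auto)
  have "PH a b" unfolding Phi_def
  proof
    show "XX dvd g22 * sg m (a * g11)" using 1 by (simp add: a_def sg_mult algebra_simps)
    have e: "g11 * sg m (a * g12 + b * g22) - g12 * sg m (a * g11)
       = sg m ?E * sg m g22 * ((sg m (sg m g11) - g11) * Ds - g11 * (sg m (sg m Ds) - Ds))"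
      by (simp add: a_def b_def sg_mult sg_add sg_minus sg_diff algebra_simps)
    have "XX dvd (sg m (sg m g11) - g11) * Ds - g11 * (sg m (sg m Ds) - Ds)"
      using sg_sg[OF m1, of g11] sg_sg[OF m1, of Ds] by (intro dvd_diff) simp_all
    then show "XX dvd g11 * sg m (a * g12 + b * g22) - g12 * sg m (a * g11)"
      unfolding e by simp
  qed
  then have "XX dvd a * g11" using Hy by blast
  then have "r dvd sg m g11 * g22 * ?E * g11" using r(2) dvd_trans unfolding a_def by blast
  moreover have "\<not> r dvd sg m g11" using sg_dvd_iff[OF r(2)] a2 by simp
  ultimately show False using notE[OF r] a3 a4 r(1) by (simp add: prime_elem_dvd_mult_iff)
qed

lemma necessary:
  assumes Hy: "\<forall>a b. PH a b \<longrightarrow> XX dvd a * g11 \<and> XX dvd a * g12 + b * g22"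
    and p: "prime_elem p" and pX: "p dvd XX"
  shows "Lc p"
proof -
  define q where "q = reflect_poly p"
  have qe: "prime_elem q" unfolding q_def by (rule prime_reflect[OF p pX])
  have qX: "q dvd XX" unfolding q_def by (rule reflect_dvd_X[OF pX])
  have rq: "reflect_poly q = p" unfolding q_def by (rule reflect_reflect_X[OF pX])
  have i: "q dvd gg" if "p dvd gg"
  proof (rule ccontr)
    assume nq: "\<not> q dvd gg"
    have pg: "p dvd g11" "p dvd g22" using that by auto
    show False
    proof (cases "q dvd g11")
      case False
      have "p dvd Ds" using pg P_g12[OF p pg] by simp
      then show False using WB[OF Hy qe qX] rq pg False by simp
    next
      case True
      then have "\<not> q dvd g22" using nq by simp
      then show False using WA[OF Hy qe qX] rq pg by simp
    qed
  qed
  have ii: "q dvd ll" if "p dvd ll"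
  proof (rule ccontr)
    assume nq: "\<not> q dvd ll"
    have pn: "\<not> p dvd g11" "\<not> p dvd g22" using that P_ll[OF p pX] by auto
    show False
    proof (cases "q dvd g11")
      case True
      then show False using WA[OF Hy p pX] pn q_def by simp
    next
      case False
      then have "q dvd g22" using nq P_ll[OF qe qX] by blast
      then show False using WC[OF Hy p pX] pn False q_def by simp
    qed
  qed
  have iii: "\<not> (p dvd h1 \<and> q dvd h1)"
  proof
    assume h: "p dvd h1 \<and> q dvd h1"
    then have "q dvd g11" "\<not> p dvd g22" using P_h1[OF qe] P_h1[OF p] by auto
    then show False using WA[OF Hy p pX] q_def by simp
  qed
  have iv: "\<not> (p dvd h2 \<and> q dvd h2 \<and> p dvd DD)"
  proof
    assume h: "p dvd h2 \<and> q dvd h2 \<and> p dvd DD"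
    then have "q dvd g22" "\<not> p dvd g11" using P_h2[OF qe] P_h2[OF p] by auto
    moreover have "q dvd Ds" using h DD_iff[OF pX] Ds_refl[OF pX] q_def by simp
    ultimately show False using WB[OF Hy p pX] q_def by simp
  qed
  show ?thesis unfolding Lc_def using i ii iii iv q_def by blast
qed

lemma LCD_char: "symp_LCD m (qc_code m g11 g12 g22) \<longleftrightarrow> (\<forall>p. prime_elem p \<longrightarrow> p dvd XX \<longrightarrow> Lc p)"
  unfolding LCD_iff[OF m1] using sufficient necessary by blast

lemma main: "symp_LCD m (qc_code m g11 g12 g22) \<longleftrightarrow>
   self_reciprocal gg \<and> self_reciprocal ll \<and> gcd h1 (reflect_poly h1) = 1
    \<and> gcd (gcd h2 (reflect_poly h2)) DD = 1"
  unfolding LCD_char Cond_iff ..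

end

theorem theorem5p3:
  fixes m :: nat and g11 g12 g22 :: "'a::{field_gcd,finite} poly"
  assumes m: "m \<ge> 1"
    and q: "coprime (card (UNIV :: 'a set)) m"
    and d11: "g11 dvd xm1 m"
    and d22: "g22 dvd xm1 m"
    and deg12: "g12 = 0 \<or> degree g12 < degree g22"
    and dprod: "g11 * g22 dvd xm1 m * g12"
  defines "g \<equiv> gcd g11 g22"
    and "l \<equiv> xm1 m div lcm g11 g22"
    and "g11' \<equiv> g11 div gcd g11 g22"
    and "g22' \<equiv> g22 div gcd g11 g22"
  shows "symp_LCD m (qc_code m g11 g12 g22) \<longleftrightarrow>
           self_reciprocal g
         \<and> self_reciprocal l
         \<and> gcd g11' (reflect_poly g11') = 1
         \<and> gcd (gcd g22' (reflect_poly g22')) (g11 * bar m g12 - g12 * bar m g11) = 1"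
proof -
  have mc: "of_nat m \<noteq> (0::'a)" by (rule of_nat_m_ne0[OF q])
  interpret qc m "TYPE('a)" g11 g12 g22
    by unfold_locales (use m mc d11 d22 deg12 dprod in auto)
  show ?thesis unfolding g_def l_def g11'_def g22'_def by (rule main)
qed

end
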